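(* Let $\mathcal X$ be a finitely aligned left-cancellative small category, $\mathcal C$ a concordant subcategory of $\mathcal X$, and $\sigma:\mathcal X^2\to\mathbb T$ a $2$-cocycle (whose restriction to $\mathcal C^2$ is also denoted $\sigma$). Then there is a unique $*$-homomorphism $\Phi:\mathcal TC^*(\mathcal C,\sigma)\to\mathcal TC^*(\mathcal X,\sigma)$ with $\Phi(t^{\mathcal C}_c)=t^{\mathcal X}_c$ for all $c\in\mathcal C$. If moreover, for every $v\in\mathcal C^0$, every finite exhaustive subset of $v\mathcal C$ is also exhaustive in $v\mathcal X$, then $\Phi$ descends to a $*$-homomorphism $\overline\Phi:C^*(\mathcal C,\sigma)\to C^*(\mathcal X,\sigma)$ with $\overline\Phi(s^{\mathcal C}_c)=s^{\mathcal X}_c$ for all $c\in\mathcal C$.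
   Context: Categories are small, identified with morphism sets; $\mathcal C^0$ objects, $r,s$ range/source, $\mathcal C^2$ composable pairs, $c\mathcal C=\{cc'\}$, $F\mathcal C=\bigcup_{c\in F}c\mathcal C$. Left-cancellative: $ab=ac\Rightarrow b=c$; finitely aligned: $a\mathcal C\cap b\mathcal C=F\mathcal C$ for some finite $F$; independent: $a\notin a'\mathcal C$ for distinct $a,a'\in F$; for $v\in\mathcal C^0$, $F\subseteq v\mathcal C$ is exhaustive if $c\mathcal C\cap F\mathcal C\ne\emptyset$ for all $c\in v\mathcal C$. A subcategory $\mathcal C\subseteq\mathcal X$ is concordant if for all $c_1,c_2\in\mathcal C$ with $c_1\mathcal X\cap c_2\mathcal X\neq\emptyset$ there is a finite independent $F\subseteq\mathcal C$ with $c_1\mathcal C\cap c_2\mathcal C=F\mathcal C$ such that whenever $x_1,x_2\in\mathcal X$ satisfy $c_1x_1=c_2x_2$, there exist $a_1,a_2$ with $c_1a_1=c_2a_2\in F$ and $y\in\mathcal X$ with $x_1=a_1y$ and $x_2=a_2y$. A $2$-cocycle: $\sigma(c_2,c_3)\sigma(c_1,c_2c_3)=\sigma(c_1,c_2)\sigma(c_1c_2,c_3)$, $\sigma(r(c),c)=1=\sigma(c,s(c))$. A $\sigma$-twisted representation: partial isometries $S_c$ with (R1) $S_{c_1}S_{c_2}=\delta_{s(c_1),r(c_2)}\sigma(c_1,c_2)S_{c_1c_2}$, (R2) $S_c^*S_c=S_{s(c)}$, (R3) $S_{c_1}S_{c_1}^*S_{c_2}S_{c_2}^*=\bigvee_{c\in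 F}S_cS_c^*$ for finite independent $F$ with $c_1\mathcal C\cap c_2\mathcal C=F\mathcal C$ ($=0$ if empty; $\bigvee$ = supremum of commuting projections); covariant if (R4) $S_v=\bigvee_{c\in F}S_cS_c^*$ for every $v$ and finite exhaustive $F\subseteq v\mathcal C$. $\mathcal TC^*(\mathcal C,\sigma)$ and $C^*(\mathcal C,\sigma)$ are generated by universal, resp. universal covariant, $\sigma$-twisted representations $t^{\mathcal C}$, $s^{\mathcal C}$. *)

theory Defs
  imports Complex_Main
begin

class cstar_algebra = real_normed_algebra + complete_space +
  fixes cscale :: "complex \<Rightarrow> 'a \<Rightarrow> 'a"
    and cadj :: "'a \<Rightarrow> 'a"
  assumes cscale_add_right: "cscale a (x + y) = cscale a x + cscale a y"
    and cscale_add_left: "cscale (a + b) x = cscale a x + cscale b x"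
    and cscale_cscale: "cscale a (cscale b x) = cscale (a * b) x"
    and cscale_one: "cscale 1 x = x"
    and scaleR_cscale: "scaleR r x = cscale (complex_of_real r) x"
    and norm_cscale: "norm (cscale a x) = cmod a * norm x"
    and mult_cscale_left: "cscale a x * y = cscale a (x * y)"
    and mult_cscale_right: "x * cscale a y = cscale a (x * y)"
    and cadj_cadj: "cadj (cadj x) = x"
    and cadj_add: "cadj (x + y) = cadj x + cadj y"
    and cadj_cscale: "cadj (cscale a x) = cscale (cnj a) (cadj x)"
    and cadj_mult: "cadj (x * y) = cadj y * cadj x"
    and cstar_identity: "norm (cadj x * x) = norm x * norm x"

definition star_hom :: "('a::cstar_algebra \<Rightarrow> 'b::cstar_algebra) \<Rightarrow> bool" where
  "star_hom f \<longleftrightarrow>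
     (\<forall>x y. f (x + y) = f x + f y) \<and> (\<forall>a x. f (cscale a x) = cscale a (f x)) \<and>
     (\<forall>x y. f (x * y) = f x * f y) \<and> (\<forall>x. f (cadj x) = cadj (f x))"

definition cstar_subalg :: "'a::cstar_algebra set \<Rightarrow> bool" where
  "cstar_subalg B \<longleftrightarrow> closed B \<and> 0 \<in> B \<and>
     (\<forall>x\<in>B. \<forall>y\<in>B. x + y \<in> B \<and> x * y \<in> B) \<and>
     (\<forall>a. \<forall>x\<in>B. cscale a x \<in> B) \<and> (\<forall>x\<in>B. cadj x \<in> B)"

definition generates :: "'m set \<Rightarrow> ('m \<Rightarrow> 'a::cstar_algebra) \<Rightarrow> bool" where
  "generates M t \<longleftrightarrow> (\<forall>B. cstar_subalg B \<and> t ` M \<subseteq> B \<longrightarrow> B = UNIV)"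

definition is_proj :: "'a::cstar_algebra \<Rightarrow> bool" where
  "is_proj p \<longleftrightarrow> cadj p = p \<and> p * p = p"

definition proj_le :: "'a::cstar_algebra \<Rightarrow> 'a \<Rightarrow> bool" where
  "proj_le p q \<longleftrightarrow> p * q = p"

definition is_sup_proj :: "'a::cstar_algebra set \<Rightarrow> 'a \<Rightarrow> bool" where
  "is_sup_proj P x \<longleftrightarrow> is_proj x \<and> (\<forall>p\<in>P. proj_le p x) \<and>
     (\<forall>q. is_proj q \<and> (\<forall>p\<in>P. proj_le p q) \<longrightarrow> proj_le x q)"

text \<open>A category is a morphism set M with range r, source s and composition cmp
  (cmp a b = ab defined when s a = r b); objects are identity morphisms.\<close>
definition small_cat :: "'m set \<Rightarrow> ('m \<Rightarrow> 'm) \<Rightarrow> ('m \<Rightarrow> 'm) \<Rightarrow> ('m \<Rightarrow> 'm \<Rightarrow> 'm) \<Rightarrow> bool" where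
  "small_cat M r s cmp \<longleftrightarrow>
    (\<forall>c\<in>M. r c \<in> M \<and> s c \<in> M \<and> r (r c) = r c \<and> s (r c) = r c \<and> r (s c) = s c \<and>
           s (s c) = s c \<and> cmp (r c) c = c \<and> cmp c (s c) = c) \<and>
    (\<forall>a\<in>M. \<forall>b\<in>M. s a = r b \<longrightarrow> cmp a b \<in> M \<and> r (cmp a b) = r a \<and> s (cmp a b) = s b) \<and>
    (\<forall>a\<in>M. \<forall>b\<in>M. \<forall>c\<in>M. s a = r b \<and> s b = r c \<longrightarrow> cmp (cmp a b) c = cmp a (cmp b c))"

definition objs :: "'m set \<Rightarrow> ('m \<Rightarrow> 'm) \<Rightarrow> ('m \<Rightarrow> 'm) \<Rightarrow> 'm set" where
  "objs M r s = {v \<in> M. r v = v \<and> s v = v}"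

definition subcat :: "'m set \<Rightarrow> 'm set \<Rightarrow> ('m \<Rightarrow> 'm) \<Rightarrow> ('m \<Rightarrow> 'm) \<Rightarrow> ('m \<Rightarrow> 'm \<Rightarrow> 'm) \<Rightarrow> bool" where
  "subcat C X r s cmp \<longleftrightarrow> C \<subseteq> X \<and> (\<forall>c\<in>C. r c \<in> C \<and> s c \<in> C) \<and>
     (\<forall>a\<in>C. \<forall>b\<in>C. s a = r b \<longrightarrow> cmp a b \<in> C)"

text \<open>c M = {c c' : c' \<in> M, composable}; F M = union of c M over c in F.\<close>
definition rid :: "'m set \<Rightarrow> ('m \<Rightarrow> 'm) \<Rightarrow> ('m \<Rightarrow> 'm) \<Rightarrow> ('m \<Rightarrow> 'm \<Rightarrow> 'm) \<Rightarrow> 'm \<Rightarrow> 'm set" where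
  "rid M r s cmp c = {cmp c d | d. d \<in> M \<and> s c = r d}"

definition ridS :: "'m set \<Rightarrow> ('m \<Rightarrow> 'm) \<Rightarrow> ('m \<Rightarrow> 'm) \<Rightarrow> ('m \<Rightarrow> 'm \<Rightarrow> 'm) \<Rightarrow> 'm set \<Rightarrow> 'm set" where
  "ridS M r s cmp F = (\<Union>c\<in>F. rid M r s cmp c)"

definition left_cancellative :: "'m set \<Rightarrow> ('m \<Rightarrow> 'm) \<Rightarrow> ('m \<Rightarrow> 'm) \<Rightarrow> ('m \<Rightarrow> 'm \<Rightarrow> 'm) \<Rightarrow> bool" where
  "left_cancellative M r s cmp \<longleftrightarrow>
     (\<forall>a\<in>M. \<forall>b\<in>M. \<forall>c\<in>M. s a = r b \<and> s a = r c \<and> cmp a b = cmp a c \<longrightarrow> b = c)"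

definition finitely_aligned :: "'m set \<Rightarrow> ('m \<Rightarrow> 'm) \<Rightarrow> ('m \<Rightarrow> 'm) \<Rightarrow> ('m \<Rightarrow> 'm \<Rightarrow> 'm) \<Rightarrow> bool" where
  "finitely_aligned M r s cmp \<longleftrightarrow>
     (\<forall>a\<in>M. \<forall>b\<in>M. \<exists>F. finite F \<and> F \<subseteq> M \<and>
        rid M r s cmp a \<inter> rid M r s cmp b = ridS M r s cmp F)"

definition independent :: "'m set \<Rightarrow> ('m \<Rightarrow> 'm) \<Rightarrow> ('m \<Rightarrow> 'm) \<Rightarrow> ('m \<Rightarrow> 'm \<Rightarrow> 'm) \<Rightarrow> 'm set \<Rightarrow> bool" where
  "independent M r s cmp F \<longleftrightarrow> (\<forall>a\<in>F. \<forall>a'\<in>F. a \<noteq> a' \<longrightarrow> a \<notin> rid M r s cmp a')"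

definition exhaustive :: "'m set \<Rightarrow> ('m \<Rightarrow> 'm) \<Rightarrow> ('m \<Rightarrow> 'm) \<Rightarrow> ('m \<Rightarrow> 'm \<Rightarrow> 'm) \<Rightarrow> 'm \<Rightarrow> 'm set \<Rightarrow> bool" where
  "exhaustive M r s cmp v F \<longleftrightarrow> F \<subseteq> rid M r s cmp v \<and>
     (\<forall>c\<in>rid M r s cmp v. rid M r s cmp c \<inter> ridS M r s cmp F \<noteq> {})"

definition concordant :: "'m set \<Rightarrow> 'm set \<Rightarrow> ('m \<Rightarrow> 'm) \<Rightarrow> ('m \<Rightarrow> 'm) \<Rightarrow> ('m \<Rightarrow> 'm \<Rightarrow> 'm) \<Rightarrow> bool" where
  "concordant C X r s cmp \<longleftrightarrow>
    (\<forall>c1\<in>C. \<forall>c2\<in>C. rid X r s cmp c1 \<inter> rid X r s cmp c2 \<noteq> {} \<longrightarrow>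
      (\<exists>F. finite F \<and> F \<subseteq> C \<and> independent C r s cmp F \<and>
         rid C r s cmp c1 \<inter> rid C r s cmp c2 = ridS C r s cmp F \<and>
         (\<forall>x1\<in>X. \<forall>x2\<in>X. s c1 = r x1 \<and> s c2 = r x2 \<and> cmp c1 x1 = cmp c2 x2 \<longrightarrow>
            (\<exists>a1\<in>C. \<exists>a2\<in>C. \<exists>y\<in>X. s c1 = r a1 \<and> s c2 = r a2 \<and>
               cmp c1 a1 = cmp c2 a2 \<and> cmp c1 a1 \<in> F \<and>
               s a1 = r y \<and> s a2 = r y \<and> x1 = cmp a1 y \<and> x2 = cmp a2 y))))"

definition cocycle2 :: "'m set \<Rightarrow> ('m \<Rightarrow> 'm) \<Rightarrow> ('m \<Rightarrow> 'm) \<Rightarrow> ('m \<Rightarrow> 'm \<Rightarrow> 'm) \<Rightarrow> ('m \<Rightarrow> 'm \<Rightarrow> complex) \<Rightarrow> bool" where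
  "cocycle2 M r s cmp \<sigma> \<longleftrightarrow>
    (\<forall>a\<in>M. \<forall>b\<in>M. s a = r b \<longrightarrow> cmod (\<sigma> a b) = 1) \<and>
    (\<forall>c1\<in>M. \<forall>c2\<in>M. \<forall>c3\<in>M. s c1 = r c2 \<and> s c2 = r c3 \<longrightarrow>
        \<sigma> c2 c3 * \<sigma> c1 (cmp c2 c3) = \<sigma> c1 c2 * \<sigma> (cmp c1 c2) c3) \<and>
    (\<forall>c\<in>M. \<sigma> (r c) c = 1 \<and> \<sigma> c (s c) = 1)"

definition twisted_rep :: "'m set \<Rightarrow> ('m \<Rightarrow> 'm) \<Rightarrow> ('m \<Rightarrow> 'm) \<Rightarrow> ('m \<Rightarrow> 'm \<Rightarrow> 'm) \<Rightarrow>
    ('m \<Rightarrow> 'm \<Rightarrow> complex) \<Rightarrow> ('m \<Rightarrow> 'a::cstar_algebra) \<Rightarrow> bool" where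
  "twisted_rep M r s cmp \<sigma> S \<longleftrightarrow>
    (\<forall>c\<in>M. is_proj (cadj (S c) * S c)) \<and>
    (\<forall>c1\<in>M. \<forall>c2\<in>M. S c1 * S c2 =
        (if s c1 = r c2 then cscale (\<sigma> c1 c2) (S (cmp c1 c2)) else 0)) \<and>
    (\<forall>c\<in>M. cadj (S c) * S c = S (s c)) \<and>
    (\<forall>c1\<in>M. \<forall>c2\<in>M. \<forall>F. finite F \<and> F \<subseteq> M \<and> independent M r s cmp F \<and>
        rid M r s cmp c1 \<inter> rid M r s cmp c2 = ridS M r s cmp F \<longrightarrow>
        is_sup_proj {S c * cadj (S c) | c. c \<in> F}
          (S c1 * cadj (S c1) * S c2 * cadj (S c2)))"

definition covariant_rep :: "'m set \<Rightarrow> ('m \<Rightarrow> 'm) \<Rightarrow> ('m \<Rightarrow> 'm) \<Rightarrow> ('m \<Rightarrow> 'm \<Rightarrow> 'm) \<Rightarrow>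
    ('m \<Rightarrow> 'm \<Rightarrow> complex) \<Rightarrow> ('m \<Rightarrow> 'a::cstar_algebra) \<Rightarrow> bool" where
  "covariant_rep M r s cmp \<sigma> S \<longleftrightarrow> twisted_rep M r s cmp \<sigma> S \<and>
    (\<forall>v\<in>objs M r s. \<forall>F. finite F \<and> exhaustive M r s cmp v F \<longrightarrow>
        is_sup_proj {S c * cadj (S c) | c. c \<in> F} (S v))"

text \<open>Universal properties. Since HOL cannot quantify over types inside a formula, the
  universal property is stated relative to a target type given by the itself argument.\<close>
definition toeplitz_universal :: "'b::cstar_algebra itself \<Rightarrow> 'm set \<Rightarrow> ('m \<Rightarrow> 'm) \<Rightarrow> ('m \<Rightarrow> 'm) \<Rightarrow>
    ('m \<Rightarrow> 'm \<Rightarrow> 'm) \<Rightarrow> ('m \<Rightarrow> 'm \<Rightarrow> complex) \<Rightarrow> ('m \<Rightarrow> 'a::cstar_algebra) \<Rightarrow> bool" where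
  "toeplitz_universal _ M r s cmp \<sigma> t \<longleftrightarrow> twisted_rep M r s cmp \<sigma> t \<and> generates M t \<and>
    (\<forall>S :: 'm \<Rightarrow> 'b. twisted_rep M r s cmp \<sigma> S \<longrightarrow>
       (\<exists>!\<pi> :: 'a \<Rightarrow> 'b. star_hom \<pi> \<and> (\<forall>c\<in>M. \<pi> (t c) = S c)))"

definition covariant_universal :: "'b::cstar_algebra itself \<Rightarrow> 'm set \<Rightarrow> ('m \<Rightarrow> 'm) \<Rightarrow> ('m \<Rightarrow> 'm) \<Rightarrow>
    ('m \<Rightarrow> 'm \<Rightarrow> 'm) \<Rightarrow> ('m \<Rightarrow> 'm \<Rightarrow> complex) \<Rightarrow> ('m \<Rightarrow> 'a::cstar_algebra) \<Rightarrow> bool" where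
  "covariant_universal _ M r s cmp \<sigma> t \<longleftrightarrow> covariant_rep M r s cmp \<sigma> t \<and> generates M t \<and>
    (\<forall>S :: 'm \<Rightarrow> 'b. covariant_rep M r s cmp \<sigma> S \<longrightarrow>
       (\<exists>!\<pi> :: 'a \<Rightarrow> 'b. star_hom \<pi> \<and> (\<forall>c\<in>M. \<pi> (t c) = S c)))"

end

theory Submission
  imports Defs
begin

lemma sc_s: "small_cat X r s cmp \<Longrightarrow> c \<in> X \<Longrightarrow> s c \<in> X" by (simp add: small_cat_def)
lemma sc_rs: "small_cat X r s cmp \<Longrightarrow> c \<in> X \<Longrightarrow> r (s c) = s c" by (simp add: small_cat_def)
lemma sc_cs: "small_cat X r s cmp \<Longrightarrow> c \<in> X \<Longrightarrow> cmp c (s c) = c" by (simp add: small_cat_def)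
lemma sc_cmp: "small_cat X r s cmp \<Longrightarrow> a \<in> X \<Longrightarrow> b \<in> X \<Longrightarrow> s a = r b \<Longrightarrow> cmp a b \<in> X"
  by (simp add: small_cat_def)
lemma sc_scmp: "small_cat X r s cmp \<Longrightarrow> a \<in> X \<Longrightarrow> b \<in> X \<Longrightarrow> s a = r b \<Longrightarrow> s (cmp a b) = s b"
  by (simp add: small_cat_def)
lemma sc_rcmp: "small_cat X r s cmp \<Longrightarrow> a \<in> X \<Longrightarrow> b \<in> X \<Longrightarrow> s a = r b \<Longrightarrow> r (cmp a b) = r a"
  by (simp add: small_cat_def)
lemma sc_assoc: "small_cat X r s cmp \<Longrightarrow> a \<in> X \<Longrightarrow> b \<in> X \<Longrightarrow> c \<in> X \<Longrightarrow> s a = r b \<Longrightarrow> s b = r c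
  \<Longrightarrow> cmp (cmp a b) c = cmp a (cmp b c)"
  by (simp add: small_cat_def)

lemma rid_iff: "x \<in> rid M r s cmp c \<longleftrightarrow> (\<exists>d. x = cmp c d \<and> d \<in> M \<and> s c = r d)"
  by (auto simp: rid_def)

lemma self_in_rid: "small_cat X r s cmp \<Longrightarrow> c \<in> X \<Longrightarrow> c \<in> rid X r s cmp c"
  unfolding rid_iff by (metis sc_s sc_rs sc_cs)

lemma rid_mono: assumes cat: "small_cat X r s cmp" and a': "a' \<in> X" and a: "a \<in> rid X r s cmp a'"
  shows "rid X r s cmp a \<subseteq> rid X r s cmp a'"
proof
  fix x assume "x \<in> rid X r s cmp a"
  then obtain e where x: "x = cmp a e" "e \<in> X" "s a = r e" by (auto simp: rid_iff)
  from a obtain d where d: "a = cmp a' d" "d \<in> X" "s a' = r d" by (auto simp: rid_iff)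
  have "s d = r e" using x d cat sc_scmp a' by metis
  then have "x = cmp a' (cmp d e)" using sc_assoc[OF cat a' d(2) x(2)] d x by simp
  moreover have "cmp d e \<in> X" using sc_cmp[OF cat d(2) x(2)] \<open>s d = r e\<close> by simp
  moreover have "r (cmp d e) = r d" using sc_rcmp[OF cat d(2) x(2)] \<open>s d = r e\<close> by simp
  ultimately show "x \<in> rid X r s cmp a'" using d by (auto simp: rid_iff)
qed

lemma indep_subset:
  assumes cat: "small_cat X r s cmp"
  shows "finite G \<Longrightarrow> G \<subseteq> X \<Longrightarrow> \<exists>G'. G' \<subseteq> G \<and> independent X r s cmp G' \<and> ridS X r s cmp G' = ridS X r s cmp G"
proof (induction "card G" arbitrary: G rule: less_induct)
  case less
  show ?case
  proof (cases "independent X r s cmp G")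
    case True then show ?thesis by blast
  next
    case False
    then obtain a a' where aa: "a \<in> G" "a' \<in> G" "a \<noteq> a'" "a \<in> rid X r s cmp a'"
      by (auto simp: independent_def)
    have eq: "ridS X r s cmp (G - {a}) = ridS X r s cmp G"
      using rid_mono[OF cat _ aa(4)] aa less.prems unfolding ridS_def by blast
    have "card (G - {a}) < card G" using aa less.prems by (meson card_Diff1_less)
    from less.hyps[OF this] less.prems obtain G' where
      "G' \<subseteq> G - {a}" "independent X r s cmp G'" "ridS X r s cmp G' = ridS X r s cmp (G - {a})" by auto
    then show ?thesis using eq by blast
  qed
qed

lemma adj_le: fixes p q :: "'a::cstar_algebra"
  assumes "cadj p = p" "cadj q = q" "q * p = p" shows "p * q = p"
  by (metis assms cadj_mult)

lemma pp_adj: "cadj (x * cadj x) = x * cadj (x::'a::cstar_algebra)"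
  by (simp add: cadj_mult cadj_cadj)

lemma lemA:
  fixes S :: "'m \<Rightarrow> 'a::cstar_algebra"
  assumes cat: "small_cat X r s cmp" and coc: "cocycle2 X r s cmp \<sigma>"
    and tw: "twisted_rep X r s cmp \<sigma> S"
    and a: "a \<in> X" and z: "z \<in> X" and az: "s a = r z"
  shows "S a * cadj (S a) * S (cmp a z) = S (cmp a z)"
    and "proj_le (S (cmp a z) * cadj (S (cmp a z))) (S a * cadj (S a))"
proof -
  let ?g = "cmp a z"
  have m: "S a * S z = cscale (\<sigma> a z) (S ?g)" using tw a z az by (simp add: twisted_rep_def)
  have n: "cmod (\<sigma> a z) = 1" using coc a z az by (simp add: cocycle2_def)
  have "cnj (\<sigma> a z) * \<sigma> a z = 1"
    by (metis complex_norm_square mult.commute n of_real_1 one_power2)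
  then have g: "S ?g = cscale (cnj (\<sigma> a z)) (S a * S z)"
    by (simp add: m cscale_cscale cscale_one)
  have sa: "S a * S (s a) = S a"
  proof -
    have "S a * S (s a) = cscale (\<sigma> a (s a)) (S (cmp a (s a)))"
      using tw a sc_s[OF cat a] sc_rs[OF cat a] by (simp add: twisted_rep_def)
    also have "\<dots> = S a" using coc a sc_cs[OF cat a] by (simp add: cocycle2_def cscale_one)
    finally show ?thesis .
  qed
  have aa: "S a * cadj (S a) * S a = S a"
    using tw a sa by (simp add: twisted_rep_def mult.assoc)
  show 1: "S a * cadj (S a) * S ?g = S ?g"
    unfolding g by (simp add: mult_cscale_right mult.assoc[symmetric] aa)
  have "S a * cadj (S a) * (S ?g * cadj (S ?g)) = S ?g * cadj (S ?g)"
    using 1 by (simp add: mult.assoc[symmetric])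
  then show "proj_le (S ?g * cadj (S ?g)) (S a * cadj (S a))"
    unfolding proj_le_def by (intro adj_le) (simp_all add: pp_adj)
qed


lemma restrict_rep:
  fixes S :: "'m \<Rightarrow> 'a::cstar_algebra"
  assumes cat: "small_cat X r s cmp" and faX: "finitely_aligned X r s cmp"
    and sub: "subcat C X r s cmp" and conc: "concordant C X r s cmp"
    and coc: "cocycle2 X r s cmp \<sigma>" and tw: "twisted_rep X r s cmp \<sigma> S"
  shows "twisted_rep C r s cmp \<sigma> S"
proof -
  have CX: "C \<subseteq> X" using sub by (simp add: subcat_def)
  have catC: "\<And>c. c \<in> C \<Longrightarrow> s c \<in> C" using sub by (simp add: subcat_def)
  have cmpC: "\<And>a b. a \<in> C \<Longrightarrow> b \<in> C \<Longrightarrow> s a = r b \<Longrightarrow> cmp a b \<in> C" using sub by (simp add: subcat_def)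
  have selfC: "\<And>c. c \<in> C \<Longrightarrow> c \<in> rid C r s cmp c"
  proof -
    fix c assume c: "c \<in> C"
    then have cX: "c \<in> X" using CX by auto
    show "c \<in> rid C r s cmp c" unfolding rid_iff
      by (rule exI[of _ "s c"]) (simp add: catC[OF c] sc_rs[OF cat cX] sc_cs[OF cat cX])
  qed
  have R3: "is_sup_proj {S c * cadj (S c) | c. c \<in> F} (S c1 * cadj (S c1) * S c2 * cadj (S c2))"
    if c1: "c1 \<in> C" and c2: "c2 \<in> C" and F: "F \<subseteq> C"
      and FI: "rid C r s cmp c1 \<inter> rid C r s cmp c2 = ridS C r s cmp F" for c1 c2 F
  proof -
    let ?P = "S c1 * cadj (S c1) * S c2 * cadj (S c2)"
    have c1X: "c1 \<in> X" and c2X: "c2 \<in> X" using c1 c2 CX by auto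
    obtain G0 where G0: "finite G0" "G0 \<subseteq> X" "rid X r s cmp c1 \<inter> rid X r s cmp c2 = ridS X r s cmp G0"
      using faX c1X c2X unfolding finitely_aligned_def by meson
    obtain G where G: "G \<subseteq> G0" "independent X r s cmp G" "ridS X r s cmp G = ridS X r s cmp G0"
      using indep_subset[OF cat G0(1,2)] by blast
    have GX: "G \<subseteq> X" using G G0 by auto
    have sup: "is_sup_proj {S c * cadj (S c) | c. c \<in> G} ?P"
    proof -
      have "\<forall>c1\<in>X. \<forall>c2\<in>X. \<forall>F. finite F \<and> F \<subseteq> X \<and> independent X r s cmp F \<and>
        rid X r s cmp c1 \<inter> rid X r s cmp c2 = ridS X r s cmp F \<longrightarrow>
        is_sup_proj {S c * cadj (S c) | c. c \<in> F} (S c1 * cadj (S c1) * S c2 * cadj (S c2))"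
        using tw unfolding twisted_rep_def by blast
      moreover have "finite G" using finite_subset[OF G(1) G0(1)] .
      ultimately show ?thesis using c1X c2X G G0 GX by simp
    qed
    have Pp: "is_proj ?P" using sup by (simp add: is_sup_proj_def)
    have le1: "proj_le (S a * cadj (S a)) ?P" if a: "a \<in> F" for a
    proof -
      have aC: "a \<in> C" using a F by auto
      have "a \<in> ridS C r s cmp F" unfolding ridS_def using a selfC[OF aC] by auto
      then have "a \<in> rid C r s cmp c1" "a \<in> rid C r s cmp c2" using FI by auto
      then obtain d1 d2 where d: "a = cmp c1 d1" "d1 \<in> C" "s c1 = r d1"
        "a = cmp c2 d2" "d2 \<in> C" "s c2 = r d2" unfolding rid_iff by metis
      have e1: "S c1 * cadj (S c1) * S a = S a"
        using lemA(1)[OF cat coc tw c1X _ d(3)] d CX by auto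
      have e2: "S c2 * cadj (S c2) * S a = S a"
        using lemA(1)[OF cat coc tw c2X _ d(6)] d CX by auto
      have "?P * (S a * cadj (S a)) = S a * cadj (S a)"
      proof -
        have e2': "S c2 * (cadj (S c2) * (S a * cadj (S a))) = S a * cadj (S a)"
          by (metis e2 mult.assoc)
        have e1': "S c1 * (cadj (S c1) * (S a * cadj (S a))) = S a * cadj (S a)"
          by (metis e1 mult.assoc)
        show ?thesis by (simp add: mult.assoc e2' e1')
      qed
      then show ?thesis unfolding proj_le_def
        by (intro adj_le) (use Pp in \<open>simp_all add: pp_adj is_proj_def\<close>)
    qed
    have le2: "proj_le ?P q" if q: "is_proj q" and hq: "\<forall>p\<in>{S c * cadj (S c) | c. c \<in> F}. proj_le p q" for q
    proof -
      have "proj_le (S g * cadj (S g)) q" if g: "g \<in> G" for g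
      proof -
        have gX: "g \<in> X" using g GX by auto
        have "g \<in> ridS X r s cmp G" unfolding ridS_def using g self_in_rid[OF cat gX] by auto
        then have "g \<in> rid X r s cmp c1" "g \<in> rid X r s cmp c2" using G G0 by auto
        then obtain x1 x2 where x: "g = cmp c1 x1" "x1 \<in> X" "s c1 = r x1"
          "g = cmp c2 x2" "x2 \<in> X" "s c2 = r x2" unfolding rid_iff by metis
        have ne: "rid X r s cmp c1 \<inter> rid X r s cmp c2 \<noteq> {}"
          using \<open>g \<in> rid X r s cmp c1\<close> \<open>g \<in> rid X r s cmp c2\<close> by auto
        obtain F0 where F0: "F0 \<subseteq> C" "rid C r s cmp c1 \<inter> rid C r s cmp c2 = ridS C r s cmp F0"
          "\<forall>x1\<in>X. \<forall>x2\<in>X. s c1 = r x1 \<and> s c2 = r x2 \<and> cmp c1 x1 = cmp c2 x2 \<longrightarrow>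
            (\<exists>a1\<in>C. \<exists>a2\<in>C. \<exists>y\<in>X. s c1 = r a1 \<and> s c2 = r a2 \<and>
               cmp c1 a1 = cmp c2 a2 \<and> cmp c1 a1 \<in> F0 \<and>
               s a1 = r y \<and> s a2 = r y \<and> x1 = cmp a1 y \<and> x2 = cmp a2 y)"
        proof -
          have "\<forall>c1\<in>C. \<forall>c2\<in>C. rid X r s cmp c1 \<inter> rid X r s cmp c2 \<noteq> {} \<longrightarrow>
      (\<exists>F. finite F \<and> F \<subseteq> C \<and> independent C r s cmp F \<and>
         rid C r s cmp c1 \<inter> rid C r s cmp c2 = ridS C r s cmp F \<and>
         (\<forall>x1\<in>X. \<forall>x2\<in>X. s c1 = r x1 \<and> s c2 = r x2 \<and> cmp c1 x1 = cmp c2 x2 \<longrightarrow>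
            (\<exists>a1\<in>C. \<exists>a2\<in>C. \<exists>y\<in>X. s c1 = r a1 \<and> s c2 = r a2 \<and>
               cmp c1 a1 = cmp c2 a2 \<and> cmp c1 a1 \<in> F \<and>
               s a1 = r y \<and> s a2 = r y \<and> x1 = cmp a1 y \<and> x2 = cmp a2 y)))"
            using conc unfolding concordant_def .
          note CC = this
          have "\<exists>F. finite F \<and> F \<subseteq> C \<and> independent C r s cmp F \<and>
         rid C r s cmp c1 \<inter> rid C r s cmp c2 = ridS C r s cmp F \<and>
         (\<forall>x1\<in>X. \<forall>x2\<in>X. s c1 = r x1 \<and> s c2 = r x2 \<and> cmp c1 x1 = cmp c2 x2 \<longrightarrow>
            (\<exists>a1\<in>C. \<exists>a2\<in>C. \<exists>y\<in>X. s c1 = r a1 \<and> s c2 = r a2 \<and>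
               cmp c1 a1 = cmp c2 a2 \<and> cmp c1 a1 \<in> F \<and>
               s a1 = r y \<and> s a2 = r y \<and> x1 = cmp a1 y \<and> x2 = cmp a2 y))"
            by (rule mp[OF bspec[OF bspec[OF CC c1] c2] ne])
          then show ?thesis using that by (elim exE conjE) blast
        qed
        then obtain a1 y where ay: "a1 \<in> C" "y \<in> X" "s c1 = r a1" "cmp c1 a1 \<in> F0"
          "s a1 = r y" "x1 = cmp a1 y"
        proof -
          have "cmp c1 x1 = cmp c2 x2" using x(1,4) by simp
          then have "\<exists>a1\<in>C. \<exists>a2\<in>C. \<exists>y\<in>X. s c1 = r a1 \<and> s c2 = r a2 \<and>
               cmp c1 a1 = cmp c2 a2 \<and> cmp c1 a1 \<in> F0 \<and>
               s a1 = r y \<and> s a2 = r y \<and> x1 = cmp a1 y \<and> x2 = cmp a2 y"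
            using F0(3)[rule_format, OF x(2) x(5)] x(3,6) by blast
          then show ?thesis using that by (elim bexE conjE) blast
        qed
        define f where "f = cmp c1 a1"
        have fC: "f \<in> C" using ay F0 f_def by auto
        have "f \<in> ridS C r s cmp F0" unfolding ridS_def using ay(4) f_def selfC[OF fC] by auto
        then have "f \<in> ridS C r s cmp F" using F0 FI by auto
        then obtain a d where ad: "a \<in> F" "f = cmp a d" "d \<in> C" "s a = r d"
          unfolding ridS_def by (auto simp: rid_def)
        have a1X: "a1 \<in> X" using ay CX by auto
        have aX: "a \<in> X" and dX: "d \<in> X" using ad F CX by auto
        have gf: "g = cmp f y" using x ay f_def sc_assoc[OF cat c1X a1X ay(2) ay(3) ay(5)] by simp
        have sd: "s d = r y" using ad ay f_def sc_scmp[OF cat c1X a1X ay(3)] sc_scmp[OF cat aX dX ad(4)] by simp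
        have ga: "g = cmp a (cmp d y)" using gf ad sc_assoc[OF cat aX dX ay(2) ad(4) sd] by simp
        have dyX: "cmp d y \<in> X" using sc_cmp[OF cat dX ay(2) sd] .
        have rdy: "s a = r (cmp d y)" using sc_rcmp[OF cat dX ay(2) sd] ad by simp
        have l1: "proj_le (S g * cadj (S g)) (S a * cadj (S a))"
          using lemA(2)[OF cat coc tw aX dyX rdy] ga by simp
        have l2: "proj_le (S a * cadj (S a)) q" using hq ad by blast
        show ?thesis using l1 l2 unfolding proj_le_def by (metis mult.assoc)
      qed
      then show ?thesis using sup q unfolding is_sup_proj_def by blast
    qed
    show ?thesis unfolding is_sup_proj_def using Pp le1 le2 by blast
  qed
  show ?thesis
  proof -
    have tw': "(\<forall>c\<in>X. is_proj (cadj (S c) * S c)) \<and>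
    (\<forall>c1\<in>X. \<forall>c2\<in>X. S c1 * S c2 =
        (if s c1 = r c2 then cscale (\<sigma> c1 c2) (S (cmp c1 c2)) else 0)) \<and>
    (\<forall>c\<in>X. cadj (S c) * S c = S (s c))" using tw unfolding twisted_rep_def by blast
    show ?thesis unfolding twisted_rep_def
    proof (intro conjI ballI allI impI)
      fix c assume "c \<in> C" then show "is_proj (cadj (S c) * S c)" using tw' CX by blast
    next
      fix c1 c2 assume "c1 \<in> C" "c2 \<in> C" then show "S c1 * S c2 =
        (if s c1 = r c2 then cscale (\<sigma> c1 c2) (S (cmp c1 c2)) else 0)" using tw' CX by blast
    next
      fix c assume "c \<in> C" then show "cadj (S c) * S c = S (s c)" using tw' CX by blast
    next
      fix c1 c2 F assume "c1 \<in> C" "c2 \<in> C" "finite F \<and> F \<subseteq> C \<and> independent C r s cmp F \<and>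
        rid C r s cmp c1 \<inter> rid C r s cmp c2 = ridS C r s cmp F"
      then show "is_sup_proj {S c * cadj (S c) | c. c \<in> F} (S c1 * cadj (S c1) * S c2 * cadj (S c2))"
        using R3 by blast
    qed
  qed
qed

lemma star_hom_comp: "star_hom f \<Longrightarrow> star_hom g \<Longrightarrow> star_hom (f \<circ> g)"
  by (simp add: star_hom_def)

theorem proposition3p14:
  fixes X C :: "'m set" and r s :: "'m \<Rightarrow> 'm" and cmp :: "'m \<Rightarrow> 'm \<Rightarrow> 'm"
    and \<sigma> :: "'m \<Rightarrow> 'm \<Rightarrow> complex"
    and tC :: "'m \<Rightarrow> 'a::cstar_algebra" and tX :: "'m \<Rightarrow> 'b::cstar_algebra"
    and sC :: "'m \<Rightarrow> 'c::cstar_algebra" and sX :: "'m \<Rightarrow> 'd::cstar_algebra"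
  assumes catX: "small_cat X r s cmp"
    and lcX: "left_cancellative X r s cmp"
    and faX: "finitely_aligned X r s cmp"
    and sub: "subcat C X r s cmp"
    and conc: "concordant C X r s cmp"
    and coc: "cocycle2 X r s cmp \<sigma>"
    and tC_univ_b: "toeplitz_universal TYPE('b) C r s cmp \<sigma> tC"
    and tC_univ_c: "toeplitz_universal TYPE('c) C r s cmp \<sigma> tC"
    and tC_univ_d: "toeplitz_universal TYPE('d) C r s cmp \<sigma> tC"
    and tX_univ: "toeplitz_universal TYPE('d) X r s cmp \<sigma> tX"
    and sC_univ: "covariant_universal TYPE('d) C r s cmp \<sigma> sC"
    and sX_univ: "covariant_universal TYPE('d) X r s cmp \<sigma> sX"
  shows "(\<exists>!\<Phi> :: 'a \<Rightarrow> 'b. star_hom \<Phi> \<and> (\<forall>c\<in>C. \<Phi> (tC c) = tX c)) \<and>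
    ((\<forall>v\<in>objs C r s. \<forall>F. finite F \<and> exhaustive C r s cmp v F \<longrightarrow> exhaustive X r s cmp v F) \<longrightarrow>
      (\<forall>(\<Phi> :: 'a \<Rightarrow> 'b) (qC :: 'a \<Rightarrow> 'c) (qX :: 'b \<Rightarrow> 'd).
         star_hom \<Phi> \<and> (\<forall>c\<in>C. \<Phi> (tC c) = tX c) \<and>
         star_hom qC \<and> (\<forall>c\<in>C. qC (tC c) = sC c) \<and>
         star_hom qX \<and> (\<forall>c\<in>X. qX (tX c) = sX c) \<longrightarrow>
         (\<exists>\<Phi>b :: 'c \<Rightarrow> 'd. star_hom \<Phi>b \<and> (\<forall>c\<in>C. \<Phi>b (sC c) = sX c) \<and>
            (\<forall>a. \<Phi>b (qC a) = qX (\<Phi> a)))))"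
proof -
  have CX: "C \<subseteq> X" using sub by (simp add: subcat_def)
  have twX: "twisted_rep X r s cmp \<sigma> tX" using tX_univ by (simp add: toeplitz_universal_def)
  have covsX: "covariant_rep X r s cmp \<sigma> sX" using sX_univ by (simp add: covariant_universal_def)
  have twsX: "twisted_rep X r s cmp \<sigma> sX" using covsX by (simp add: covariant_rep_def)
  have twC: "twisted_rep C r s cmp \<sigma> tX" by (rule restrict_rep[OF catX faX sub conc coc twX])
  have twsC: "twisted_rep C r s cmp \<sigma> sX" by (rule restrict_rep[OF catX faX sub conc coc twsX])
  have U1: "\<forall>S :: 'm \<Rightarrow> 'b. twisted_rep C r s cmp \<sigma> S \<longrightarrow>
       (\<exists>!\<pi> :: 'a \<Rightarrow> 'b. star_hom \<pi> \<and> (\<forall>c\<in>C. \<pi> (tC c) = S c))"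
    using tC_univ_b unfolding toeplitz_universal_def by blast
  have part1: "\<exists>!\<Phi> :: 'a \<Rightarrow> 'b. star_hom \<Phi> \<and> (\<forall>c\<in>C. \<Phi> (tC c) = tX c)"
    using U1 twC by blast
  have part2: "\<exists>\<Phi>b :: 'c \<Rightarrow> 'd. star_hom \<Phi>b \<and> (\<forall>c\<in>C. \<Phi>b (sC c) = sX c) \<and>
            (\<forall>a. \<Phi>b (qC a) = qX (\<Phi> a))"
    if exh: "\<forall>v\<in>objs C r s. \<forall>F. finite F \<and> exhaustive C r s cmp v F \<longrightarrow> exhaustive X r s cmp v F"
      and H: "star_hom \<Phi> \<and> (\<forall>c\<in>C. \<Phi> (tC c) = tX c) \<and>
         star_hom qC \<and> (\<forall>c\<in>C. qC (tC c) = sC c) \<and>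
         star_hom qX \<and> (\<forall>c\<in>X. qX (tX c) = sX c)"
    for \<Phi> :: "'a \<Rightarrow> 'b" and qC :: "'a \<Rightarrow> 'c" and qX :: "'b \<Rightarrow> 'd"
  proof -
    have covX: "\<forall>v\<in>objs X r s. \<forall>F. finite F \<and> exhaustive X r s cmp v F \<longrightarrow>
        is_sup_proj {sX c * cadj (sX c) | c. c \<in> F} (sX v)"
      using covsX unfolding covariant_rep_def by blast
    have covC: "covariant_rep C r s cmp \<sigma> sX"
      unfolding covariant_rep_def
    proof (intro conjI twsC ballI allI impI)
      fix v F assume v: "v \<in> objs C r s" and F: "finite F \<and> exhaustive C r s cmp v F"
      have vX: "v \<in> objs X r s" using v CX by (auto simp: objs_def)
      have "exhaustive X r s cmp v F" using exh v F by blast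
      then show "is_sup_proj {sX c * cadj (sX c) | c. c \<in> F} (sX v)" using covX vX F by blast
    qed
    have "\<forall>S :: 'm \<Rightarrow> 'd. covariant_rep C r s cmp \<sigma> S \<longrightarrow>
       (\<exists>!\<pi> :: 'c \<Rightarrow> 'd. star_hom \<pi> \<and> (\<forall>c\<in>C. \<pi> (sC c) = S c))"
      using sC_univ unfolding covariant_universal_def by blast
    then obtain Pb :: "'c \<Rightarrow> 'd" where Pb: "star_hom Pb" "\<forall>c\<in>C. Pb (sC c) = sX c"
      using covC by blast
    have U3: "\<forall>S :: 'm \<Rightarrow> 'd. twisted_rep C r s cmp \<sigma> S \<longrightarrow>
       (\<exists>!\<pi> :: 'a \<Rightarrow> 'd. star_hom \<pi> \<and> (\<forall>c\<in>C. \<pi> (tC c) = S c))"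
      using tC_univ_d unfolding toeplitz_universal_def by blast
    then have uq: "\<exists>!\<pi> :: 'a \<Rightarrow> 'd. star_hom \<pi> \<and> (\<forall>c\<in>C. \<pi> (tC c) = sX c)"
      using twsC by blast
    have h1: "star_hom (Pb \<circ> qC) \<and> (\<forall>c\<in>C. (Pb \<circ> qC) (tC c) = sX c)"
      using Pb H star_hom_comp by auto
    have h2: "star_hom (qX \<circ> \<Phi>) \<and> (\<forall>c\<in>C. (qX \<circ> \<Phi>) (tC c) = sX c)"
      using H star_hom_comp CX by auto
    have "Pb \<circ> qC = qX \<circ> \<Phi>" using uq h1 h2 by blast
    then have "\<forall>a. Pb (qC a) = qX (\<Phi> a)" by (metis comp_apply)
    then show ?thesis using Pb by blast
  qed
  show ?thesis using part1 part2 by blast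
qed

end
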